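(* Let $n>5f$ and consider an execution of the convergence algorithm described in the context, with at most $f$ Byzantine robots. Let $U(t)$ be the multiset of positions of the correct robots at time $t$. For every correct robot $i$ and every time $t$, $$range\big(trim^i_{2f}(P(t))\big) \subseteq range(U(t)),$$ where $range(S)=[\min S,\max S]$.
   Context: Setting: $n$ robots on the real line, of which at most $f$ are Byzantine (arbitrary positions) and $m\ge n-f$ are correct. Robots are anonymous, oblivious, have no common orientation, and have unlimited visibility with strong multiplicity detection. They operate in Look–Compute–Move cycles. Notation: $P(t)$ is the multiset of all $n$ positions at time $t$, sorted $P_1(t)\le\dots\le P_n(t)$. Let $x_i$ be the position of robot $i$. $trim^i_{2f}(P(t))$ is the multiset obtained from $P(t)$ by removing, among the $2f$ smallest positions, those strictly smaller than $x_i$, and, among the $2f$ largest positions, those strictly larger than $x_i$. Its minimum is $\min(x_i,P_{2f+1}(t))$ and its maximum is $\max(x_i,P_{n-2f}(t))$. The algorithm: robot $i$, after observing $P(t)$, is elected iff $x_i\le P_{f+1}(t)$ or $x_i\ge P_{n-f}(t)$. If elected, it moves toward the midpoint of $\min$ and $\max$ of $trim^i_{2f}(P(t))$; otherwise it does not move. *)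

theory Defs
  imports Complex_Main "HOL-Library.Multiset"
begin

definition positions :: "nat \<Rightarrow> (nat \<Rightarrow> real) \<Rightarrow> real multiset" where
  "positions n x = image_mset x (mset_set {0..<n})"

definition trim :: "nat \<Rightarrow> real \<Rightarrow> real multiset \<Rightarrow> real multiset" where
  "trim f xi P = (let xs = sorted_list_of_multiset P; N = length xs in
     mset (map (\<lambda>j. xs ! j)
       (filter (\<lambda>j. \<not> (j < 2*f \<and> xs ! j < xi) \<and> \<not> (N - 2*f \<le> j \<and> xs ! j > xi)) [0..<N])))"

definition range_ms :: "real multiset \<Rightarrow> real set" where
  "range_ms S = {Min (set_mset S) .. Max (set_mset S)}"

end

theory Submission
  imports Defs
begin

lemma sorted_low:
  fixes xs :: "real list"
  assumes "sorted xs" "j < length xs" "length (filter (\<lambda>v. v < m) xs) \<le> f" "f \<le> j"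
  shows "m \<le> xs ! j"
proof (rule ccontr)
  assume "\<not> m \<le> xs ! j"
  hence lt: "xs ! j < m" by simp
  have "\<forall>v\<in>set (take (Suc j) xs). v < m"
  proof
    fix v assume "v \<in> set (take (Suc j) xs)"
    then obtain k where k: "k < length (take (Suc j) xs)" "v = take (Suc j) xs ! k"
      by (metis in_set_conv_nth)
    hence "k \<le> j" "v = xs ! k" by auto
    hence "v \<le> xs ! j" using assms(1,2) by (simp add: sorted_nth_mono)
    thus "v < m" using lt by simp
  qed
  hence "filter (\<lambda>v. v < m) (take (Suc j) xs) = take (Suc j) xs" by simp
  hence "length (filter (\<lambda>v. v < m) (take (Suc j) xs)) = Suc j" using assms(2) by simp
  moreover have "length (filter (\<lambda>v. v < m) (take (Suc j) xs)) \<le> length (filter (\<lambda>v. v < m) xs)"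
    by (metis append_take_drop_id filter_append length_append le_add1)
  ultimately show False using assms(3,4) by simp
qed

lemma sorted_high:
  fixes xs :: "real list"
  assumes "sorted xs" "j < length xs" "length (filter (\<lambda>v. v > M) xs) \<le> f" "j + f < length xs"
  shows "xs ! j \<le> M"
proof (rule ccontr)
  assume "\<not> xs ! j \<le> M"
  hence lt: "xs ! j > M" by simp
  have "\<forall>v\<in>set (drop j xs). v > M"
  proof
    fix v assume "v \<in> set (drop j xs)"
    then obtain k where k: "k < length (drop j xs)" "v = drop j xs ! k"
      by (metis in_set_conv_nth)
    hence "j + k < length xs" "v = xs ! (j + k)" using assms(2) by auto
    hence "xs ! j \<le> v" using assms(1) by (simp add: sorted_nth_mono)
    thus "v > M" using lt by simp
  qed
  hence "filter (\<lambda>v. v > M) (drop j xs) = drop j xs" by simp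
  hence "length (filter (\<lambda>v. v > M) (drop j xs)) = length xs - j" by simp
  moreover have "length (filter (\<lambda>v. v > M) (drop j xs)) \<le> length (filter (\<lambda>v. v > M) xs)"
    by (metis append_take_drop_id filter_append length_append le_add2)
  ultimately show False using assms(3,4) by simp
qed

lemma count_filter:
  fixes x :: "nat \<Rightarrow> real"
  assumes "C \<subseteq> {0..<n}" "card C \<ge> n - f" "\<forall>k\<in>C. \<not> P (x k)"
  shows "length (filter P (sorted_list_of_multiset (positions n x))) \<le> f"
proof -
  have "length (filter P (sorted_list_of_multiset (positions n x)))
      = size (filter_mset P (mset (sorted_list_of_multiset (positions n x))))"
    by (metis mset_filter size_mset)
  also have "\<dots> = size (filter_mset P (positions n x))" by simp
  also have "\<dots> = size (image_mset x (filter_mset (\<lambda>k. P (x k)) (mset_set {0..<n})))"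
    unfolding positions_def by (simp add: filter_mset_image_mset)
  also have "\<dots> = card {k\<in>{0..<n}. P (x k)}" by simp
  also have "\<dots> \<le> card ({0..<n} - C)"
    by (rule card_mono) (use assms in auto)
  also have "\<dots> = n - card C" using assms(1)
    by (simp add: card_Diff_subset finite_subset)
  also have "\<dots> \<le> f" using assms(2) by simp
  finally show ?thesis .
qed

theorem lemma6:
  fixes n f :: nat and C :: "nat set" and pos :: "real \<Rightarrow> nat \<Rightarrow> real"
    and i :: nat and t :: real
  assumes "n > 5 * f"
    and "C \<subseteq> {0..<n}"
    and "card C \<ge> n - f"
    and "i \<in> C"
  shows "range_ms (trim f (pos t i) (positions n (pos t)))
           \<subseteq> range_ms (image_mset (pos t) (mset_set C))"
proof -
  let ?x = "pos t"
  let ?xi = "pos t i"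
  define xs where "xs = sorted_list_of_multiset (positions n ?x)"
  define N where "N = length xs"
  define K where "K = (\<lambda>j. \<not> (j < 2*f \<and> xs ! j < ?xi) \<and> \<not> (N - 2*f \<le> j \<and> xs ! j > ?xi))"
  have finC: "finite C" using assms(2) finite_subset by blast
  have setU: "set_mset (image_mset ?x (mset_set C)) = ?x ` C" using finC by simp
  define mU where "mU = Min (?x ` C)"
  define MU where "MU = Max (?x ` C)"
  have mU: "\<forall>k\<in>C. mU \<le> ?x k" using finC mU_def by simp
  have MU: "\<forall>k\<in>C. ?x k \<le> MU" using finC MU_def by simp
  have srt: "sorted xs" unfolding xs_def by simp
  have setxs: "set xs = ?x ` {0..<n}" unfolding xs_def positions_def by simp
  have lowc: "length (filter (\<lambda>v. v < mU) xs) \<le> f"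
    unfolding xs_def by (rule count_filter[OF assms(2,3)]) (use mU in force)
  have highc: "length (filter (\<lambda>v. v > MU) xs) \<le> f"
    unfolding xs_def by (rule count_filter[OF assms(2,3)]) (use MU in force)
  have trimset: "set_mset (trim f ?xi (positions n ?x)) = {xs ! j | j. j < N \<and> K j}"
    unfolding trim_def Let_def xs_def[symmetric] N_def[symmetric] K_def by auto
  have "?xi \<in> set xs" using setxs assms(2,4) by auto
  then obtain j0 where "j0 < N" "xs ! j0 = ?xi" unfolding N_def by (metis in_set_conv_nth)
  hence "\<exists>j. ?xi = xs ! j \<and> j < N \<and> K j" unfolding K_def
    by (intro exI[of _ j0]) simp
  hence ne: "?xi \<in> set_mset (trim f ?xi (positions n ?x))"
    unfolding trimset by blast
  have fin: "finite (set_mset (trim f ?xi (positions n ?x)))" by simp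
  have bnd: "mU \<le> v \<and> v \<le> MU" if vin: "v \<in> set_mset (trim f ?xi (positions n ?x))" for v
  proof -
    obtain j where j: "j < N" "K j" "v = xs ! j" using vin unfolding trimset by blast
    have xim: "mU \<le> ?xi" "?xi \<le> MU" using mU MU assms(4) by auto
    have N: "N = n" unfolding N_def xs_def
      by (metis mset_sorted_list_of_multiset size_mset positions_def size_image_mset size_mset_set card_atLeastLessThan diff_zero)
    have "mU \<le> v"
    proof (cases "j < 2*f")
      case True thus ?thesis using j xim unfolding K_def by auto
    next
      case False thus ?thesis using sorted_low[OF srt _ lowc, of j] j N_def by simp
    qed
    moreover have "v \<le> MU"
    proof (cases "N - 2*f \<le> j")
      case True thus ?thesis using j xim unfolding K_def by auto
    next
      case False
      hence "j + f < N" using N assms(1) by linarith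
      thus ?thesis using sorted_high[OF srt _ highc, of j] j N_def by simp
    qed
    ultimately show ?thesis by simp
  qed
  have "mU \<le> Min (set_mset (trim f ?xi (positions n ?x)))"
    using bnd ne fin by (metis Min_in empty_iff)
  moreover have "Max (set_mset (trim f ?xi (positions n ?x))) \<le> MU"
    using bnd ne fin by (metis Max_in empty_iff)
  ultimately show ?thesis unfolding range_ms_def setU mU_def MU_def by auto
qed

end
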